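(* Let $k$ be a field and $\mathsf{E}$ a left strictly locally finite $k$-linear category. Then the class of cofinite right $\mathsf{E}$-modules is closed under extensions in the category of right $\mathsf{E}$-modules: if $0\to L\to M\to N\to0$ is a short exact sequence of right $\mathsf{E}$-modules with $L$ and $N$ cofinite, then $M$ is cofinite.
   Context: A small $k$-linear category $\mathsf{E}$ has $k$-vector spaces $\operatorname{Hom}_\mathsf{E}(x,y)$, $k$-bilinear associative composition and identities with $\mathrm{id}_x\ne0$. A right $\mathsf{E}$-module is a $k$-linear functor $N:\mathsf{E}^{op}\to k\text{-Vect}$ (action maps $\operatorname{Hom}_\mathsf{E}(x,y)\otimes_kN(y)\to N(x)$). Write $x\preceq y$ if there are $n\ge1$ and objects $x=z_0,\dots,z_n=y$ with $\operatorname{Hom}_\mathsf{E}(z_{i-1},z_i)\neq0$ for all $i$; $x\prec y$ means $x\preceq y$ and not $y\preceq x$. $\mathsf{E}$ is locally finite if all Hom spaces are finite-dimensional and every $\{z:x\preceq z\preceq y\}$ is finite; left strictly locally finite if moreover for every $y$ there is a finite set $X_y$ of objects with $x\prec y$ for $x\in X_y$ such that every $f:z\to y$ with $z\prec y$ equals $\sum_{i=1}^nh_ig_i$ ($n\ge0$) with $g_i:z\to x_i$, $h_i:x_i\to y$, $x_i\in X_y$. A right $\mathsf{E}$-module $N$ is cofinite if for every object $y$ there is a finite set of objects $A$ such that the action map $\operatorname{Hom}_\mathsf{E}(x,y)\otimes_kN(y)\to N(x)$ vanishes for all $x\notin A$. *)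

theory Defs
  imports Complex_Main
begin

(* All morphisms live in one ambient k-vector space 'm (scalar multiplication sc);
   Hom x y is a k-subspace of it, cmp g f is "g after f" for f : x -> y, g : y -> z,
   and ide x is the identity of x. *)
definition klinear_cat ::
  "('k::field \<Rightarrow> 'm::ab_group_add \<Rightarrow> 'm) \<Rightarrow> ('o \<Rightarrow> 'o \<Rightarrow> 'm set)
   \<Rightarrow> ('m \<Rightarrow> 'm \<Rightarrow> 'm) \<Rightarrow> ('o \<Rightarrow> 'm) \<Rightarrow> bool" where
  "klinear_cat sc Hom cmp ide \<longleftrightarrow>
     vector_space sc \<and>
     (\<forall>x y. module.subspace sc (Hom x y)) \<and>
     (\<forall>x y z f g. f \<in> Hom x y \<longrightarrow> g \<in> Hom y z \<longrightarrow> cmp g f \<in> Hom x z) \<and>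
     (\<forall>x y z f f' g c. f \<in> Hom x y \<longrightarrow> f' \<in> Hom x y \<longrightarrow> g \<in> Hom y z \<longrightarrow>
          cmp g (f + f') = cmp g f + cmp g f' \<and> cmp g (sc c f) = sc c (cmp g f)) \<and>
     (\<forall>x y z f g g' c. f \<in> Hom x y \<longrightarrow> g \<in> Hom y z \<longrightarrow> g' \<in> Hom y z \<longrightarrow>
          cmp (g + g') f = cmp g f + cmp g' f \<and> cmp (sc c g) f = sc c (cmp g f)) \<and>
     (\<forall>w x y z f g h. f \<in> Hom w x \<longrightarrow> g \<in> Hom x y \<longrightarrow> h \<in> Hom y z \<longrightarrow>
          cmp h (cmp g f) = cmp (cmp h g) f) \<and>
     (\<forall>x. ide x \<in> Hom x x \<and> ide x \<noteq> 0) \<and>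
     (\<forall>x y f. f \<in> Hom x y \<longrightarrow> cmp (ide y) f = f \<and> cmp f (ide x) = f)"

definition fin_dim :: "('k::field \<Rightarrow> 'm::ab_group_add \<Rightarrow> 'm) \<Rightarrow> 'm set \<Rightarrow> bool" where
  "fin_dim sc S \<longleftrightarrow> (\<exists>B. finite B \<and> B \<subseteq> S \<and> module.span sc B = S)"

definition cat_preceq :: "('o \<Rightarrow> 'o \<Rightarrow> 'm::zero set) \<Rightarrow> 'o \<Rightarrow> 'o \<Rightarrow> bool" where
  "cat_preceq Hom = tranclp (\<lambda>x y. Hom x y \<noteq> {0})"

definition cat_prec :: "('o \<Rightarrow> 'o \<Rightarrow> 'm::zero set) \<Rightarrow> 'o \<Rightarrow> 'o \<Rightarrow> bool" where
  "cat_prec Hom x y \<longleftrightarrow> cat_preceq Hom x y \<and> \<not> cat_preceq Hom y x"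

definition locally_finite_cat ::
  "('k::field \<Rightarrow> 'm::ab_group_add \<Rightarrow> 'm) \<Rightarrow> ('o \<Rightarrow> 'o \<Rightarrow> 'm set) \<Rightarrow> bool" where
  "locally_finite_cat sc Hom \<longleftrightarrow>
     (\<forall>x y. fin_dim sc (Hom x y)) \<and>
     (\<forall>x y. finite {z. cat_preceq Hom x z \<and> cat_preceq Hom z y})"

definition left_strictly_locally_finite ::
  "('k::field \<Rightarrow> 'm::ab_group_add \<Rightarrow> 'm) \<Rightarrow> ('o \<Rightarrow> 'o \<Rightarrow> 'm set) \<Rightarrow> ('m \<Rightarrow> 'm \<Rightarrow> 'm) \<Rightarrow> bool" where
  "left_strictly_locally_finite sc Hom cmp \<longleftrightarrow>
     locally_finite_cat sc Hom \<and>
     (\<forall>y. \<exists>X. finite X \<and> (\<forall>x\<in>X. cat_prec Hom x y) \<and>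
        (\<forall>z f. cat_prec Hom z y \<longrightarrow> f \<in> Hom z y \<longrightarrow>
           (\<exists>n::nat. \<exists>g h xs. f = (\<Sum>i<n. cmp (h i) (g i)) \<and>
              (\<forall>i<n. xs i \<in> X \<and> g i \<in> Hom z (xs i) \<and> h i \<in> Hom (xs i) y))))"

(* Right E-module N : E^op -> k-Vect.  N x is a k-subspace of an ambient k-vector space 'v
   (scalar multiplication scv); act f n \<in> N x is the action of f : x -> y on n \<in> N y. *)
definition right_module ::
  "('k::field \<Rightarrow> 'm::ab_group_add \<Rightarrow> 'm) \<Rightarrow> ('o \<Rightarrow> 'o \<Rightarrow> 'm set) \<Rightarrow> ('m \<Rightarrow> 'm \<Rightarrow> 'm) \<Rightarrow> ('o \<Rightarrow> 'm)
   \<Rightarrow> ('k \<Rightarrow> 'v::ab_group_add \<Rightarrow> 'v) \<Rightarrow> ('o \<Rightarrow> 'v set) \<Rightarrow> ('m \<Rightarrow> 'v \<Rightarrow> 'v) \<Rightarrow> bool" where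
  "right_module sc Hom cmp ide scv N act \<longleftrightarrow>
     vector_space scv \<and>
     (\<forall>x. module.subspace scv (N x)) \<and>
     (\<forall>x y f n. f \<in> Hom x y \<longrightarrow> n \<in> N y \<longrightarrow> act f n \<in> N x) \<and>
     (\<forall>x y f f' n c. f \<in> Hom x y \<longrightarrow> f' \<in> Hom x y \<longrightarrow> n \<in> N y \<longrightarrow>
          act (f + f') n = act f n + act f' n \<and> act (sc c f) n = scv c (act f n)) \<and>
     (\<forall>x y f n n' c. f \<in> Hom x y \<longrightarrow> n \<in> N y \<longrightarrow> n' \<in> N y \<longrightarrow>
          act f (n + n') = act f n + act f n' \<and> act f (scv c n) = scv c (act f n)) \<and>
     (\<forall>x y z f g n. f \<in> Hom x y \<longrightarrow> g \<in> Hom y z \<longrightarrow> n \<in> N z \<longrightarrow>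
          act (cmp g f) n = act f (act g n)) \<and>
     (\<forall>x n. n \<in> N x \<longrightarrow> act (ide x) n = n)"

definition rmod_hom ::
  "('o \<Rightarrow> 'o \<Rightarrow> 'm set) \<Rightarrow> ('k \<Rightarrow> 'a::ab_group_add \<Rightarrow> 'a) \<Rightarrow> ('o \<Rightarrow> 'a set) \<Rightarrow> ('m \<Rightarrow> 'a \<Rightarrow> 'a)
   \<Rightarrow> ('k \<Rightarrow> 'b::ab_group_add \<Rightarrow> 'b) \<Rightarrow> ('o \<Rightarrow> 'b set) \<Rightarrow> ('m \<Rightarrow> 'b \<Rightarrow> 'b)
   \<Rightarrow> ('o \<Rightarrow> 'a \<Rightarrow> 'b) \<Rightarrow> bool" where
  "rmod_hom Hom scA A actA scB B actB phi \<longleftrightarrow>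
     (\<forall>x a. a \<in> A x \<longrightarrow> phi x a \<in> B x) \<and>
     (\<forall>x a a' c. a \<in> A x \<longrightarrow> a' \<in> A x \<longrightarrow>
          phi x (a + a') = phi x a + phi x a' \<and> phi x (scA c a) = scB c (phi x a)) \<and>
     (\<forall>x y f a. f \<in> Hom x y \<longrightarrow> a \<in> A y \<longrightarrow> phi x (actA f a) = actB f (phi y a))"

definition short_exact ::
  "('o \<Rightarrow> 'a set) \<Rightarrow> ('o \<Rightarrow> 'b::zero set) \<Rightarrow> ('o \<Rightarrow> 'c::zero set)
   \<Rightarrow> ('o \<Rightarrow> 'a \<Rightarrow> 'b) \<Rightarrow> ('o \<Rightarrow> 'b \<Rightarrow> 'c) \<Rightarrow> bool" where
  "short_exact L M N phi psi \<longleftrightarrow>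
     (\<forall>x. inj_on (phi x) (L x) \<and>
          phi x ` L x = {m \<in> M x. psi x m = 0} \<and>
          psi x ` M x = N x)"

definition cofinite_module ::
  "('o \<Rightarrow> 'o \<Rightarrow> 'm set) \<Rightarrow> ('o \<Rightarrow> 'v::zero set) \<Rightarrow> ('m \<Rightarrow> 'v \<Rightarrow> 'v) \<Rightarrow> bool" where
  "cofinite_module Hom N act \<longleftrightarrow>
     (\<forall>y. \<exists>A. finite A \<and> (\<forall>x. x \<notin> A \<longrightarrow> (\<forall>f\<in>Hom x y. \<forall>n\<in>N y. act f n = 0)))"

end

theory Submission imports Defs begin

lemma vs_mod: "vector_space sc \<Longrightarrow> module sc"
  by (simp add: vector_space_def module_def)

lemma sub_facts:
  assumes "vector_space sc" "module.subspace sc S"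
  shows "0 \<in> S" "\<And>a b. a \<in> S \<Longrightarrow> b \<in> S \<Longrightarrow> a + b \<in> S"
  using module.subspace_def[OF vs_mod[OF assms(1)]] assms(2) by auto

lemma hom_0: assumes "klinear_cat sc Hom cmp ide" shows "0 \<in> Hom x y"
proof -
  have "vector_space sc" "module.subspace sc (Hom x y)" using assms unfolding klinear_cat_def by auto
  then show ?thesis by (rule sub_facts)
qed

lemma hom_add: assumes "klinear_cat sc Hom cmp ide" "a \<in> Hom x y" "b \<in> Hom x y" shows "a + b \<in> Hom x y"
proof -
  have "vector_space sc" "module.subspace sc (Hom x y)" using assms unfolding klinear_cat_def by auto
  then show ?thesis using sub_facts(2) assms(2,3) by blast
qed

lemma rm_closed: "right_module sc Hom cmp ide scv N act \<Longrightarrow> f \<in> Hom x y \<Longrightarrow> n \<in> N y \<Longrightarrow> act f n \<in> N x"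
  by (simp add: right_module_def rmod_hom_def klinear_cat_def)
lemma rm_addf: "right_module sc Hom cmp ide scv N act \<Longrightarrow> f \<in> Hom x y \<Longrightarrow> f' \<in> Hom x y \<Longrightarrow> n \<in> N y \<Longrightarrow> act (f + f') n = act f n + act f' n"
  by (simp add: right_module_def rmod_hom_def klinear_cat_def)
lemma rm_comp: "right_module sc Hom cmp ide scv N act \<Longrightarrow> f \<in> Hom x y \<Longrightarrow> g \<in> Hom y z \<Longrightarrow> n \<in> N z \<Longrightarrow> act (cmp g f) n = act f (act g n)"
  by (simp add: right_module_def rmod_hom_def klinear_cat_def)
lemma rm_id: "right_module sc Hom cmp ide scv N act \<Longrightarrow> n \<in> N x \<Longrightarrow> act (ide x) n = n"
  by (simp add: right_module_def rmod_hom_def klinear_cat_def)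
lemma rm_0: "right_module sc Hom cmp ide scv N act \<Longrightarrow> 0 \<in> N x"
  unfolding right_module_def using sub_facts(1) by auto
lemma hm_closed: "rmod_hom Hom scA A actA scB B actB phi \<Longrightarrow> a \<in> A x \<Longrightarrow> phi x a \<in> B x"
  by (simp add: right_module_def rmod_hom_def klinear_cat_def)
lemma hm_add: "rmod_hom Hom scA A actA scB B actB phi \<Longrightarrow> a \<in> A x \<Longrightarrow> a' \<in> A x \<Longrightarrow> phi x (a + a') = phi x a + phi x a'"
  by (simp add: right_module_def rmod_hom_def klinear_cat_def)
lemma hm_nat: "rmod_hom Hom scA A actA scB B actB phi \<Longrightarrow> f \<in> Hom x y \<Longrightarrow> a \<in> A y \<Longrightarrow> phi x (actA f a) = actB f (phi y a)"
  by (simp add: right_module_def rmod_hom_def klinear_cat_def)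
lemma kc_cmp: "klinear_cat sc Hom cmp ide \<Longrightarrow> f \<in> Hom x y \<Longrightarrow> g \<in> Hom y z \<Longrightarrow> cmp g f \<in> Hom x z"
  by (simp add: right_module_def rmod_hom_def klinear_cat_def)
lemma kc_id: "klinear_cat sc Hom cmp ide \<Longrightarrow> ide x \<in> Hom x x"
  by (simp add: right_module_def rmod_hom_def klinear_cat_def)

lemma lslf_lf: "left_strictly_locally_finite sc Hom cmp \<Longrightarrow> finite {z. cat_preceq Hom t z \<and> cat_preceq Hom z t}"
  by (simp add: left_strictly_locally_finite_def locally_finite_cat_def)
lemma lslf_X: "left_strictly_locally_finite sc Hom cmp \<Longrightarrow> \<forall>t. \<exists>X. finite X \<and> (\<forall>x\<in>X. cat_prec Hom x t) \<and>
        (\<forall>z f. cat_prec Hom z t \<longrightarrow> f \<in> Hom z t \<longrightarrow>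
           (\<exists>n::nat. \<exists>g h xs. f = (\<Sum>i<n. cmp (h i) (g i)) \<and>
              (\<forall>i<n. xs i \<in> X \<and> g i \<in> Hom z (xs i) \<and> h i \<in> Hom (xs i) t)))"
  unfolding left_strictly_locally_finite_def by (elim conjE)
lemma cof_ex: "cofinite_module Hom L actL \<Longrightarrow> \<forall>w. \<exists>A. finite A \<and> (\<forall>x. x \<notin> A \<longrightarrow> (\<forall>f\<in>Hom x w. \<forall>n\<in>L w. actL f n = 0))"
  unfolding cofinite_module_def .

lemma act_0:
  assumes K: "klinear_cat sc Hom cmp ide" and R: "right_module sc Hom cmp ide scM M act"
    and u: "u \<in> M t"
  shows "act 0 u = 0"
proof -
  have "act (0 + 0) u = act 0 u + act 0 u"
    using rm_addf[OF R hom_0[OF K] hom_0[OF K] u] by simp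
  then show ?thesis by simp
qed

lemma act_sum:
  assumes K: "klinear_cat sc Hom cmp ide" and R: "right_module sc Hom cmp ide scM M act"
    and f: "\<forall>i<(n::nat). f i \<in> Hom x t" and u: "u \<in> M t"
  shows "(\<Sum>i<n. f i) \<in> Hom x t \<and> act (\<Sum>i<n. f i) u = (\<Sum>i<n. act (f i) u)"
  using f
proof (induction n)
  case 0
  then show ?case using hom_0[OF K] act_0[OF K R u] by simp
next
  case (Suc n)
  then have IH: "(\<Sum>i<n. f i) \<in> Hom x t" "act (\<Sum>i<n. f i) u = (\<Sum>i<n. act (f i) u)"
    and fn: "f n \<in> Hom x t" by auto
  have "act ((\<Sum>i<n. f i) + f n) u = act (\<Sum>i<n. f i) u + act (f n) u"
    using rm_addf[OF R IH(1) fn u] .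
  then show ?case using IH fn hom_add[OF K] by simp
qed

lemma prec_trans: "cat_prec Hom a b \<Longrightarrow> cat_prec Hom b c \<Longrightarrow> cat_prec Hom a c"
  unfolding cat_prec_def cat_preceq_def by (meson tranclp_trans)

lemma prec_irrefl: "\<not> cat_prec Hom a a"
  unfolding cat_prec_def by simp

theorem lemma6p3:
  fixes sc :: "'k::field \<Rightarrow> 'm::ab_group_add \<Rightarrow> 'm"
    and Hom :: "'o \<Rightarrow> 'o \<Rightarrow> 'm set" and cmp :: "'m \<Rightarrow> 'm \<Rightarrow> 'm" and ide :: "'o \<Rightarrow> 'm"
    and scL :: "'k \<Rightarrow> 'a::ab_group_add \<Rightarrow> 'a" and L :: "'o \<Rightarrow> 'a set" and actL :: "'m \<Rightarrow> 'a \<Rightarrow> 'a"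
    and scM :: "'k \<Rightarrow> 'b::ab_group_add \<Rightarrow> 'b" and M :: "'o \<Rightarrow> 'b set" and actM :: "'m \<Rightarrow> 'b \<Rightarrow> 'b"
    and scN :: "'k \<Rightarrow> 'c::ab_group_add \<Rightarrow> 'c" and N :: "'o \<Rightarrow> 'c set" and actN :: "'m \<Rightarrow> 'c \<Rightarrow> 'c"
    and phi :: "'o \<Rightarrow> 'a \<Rightarrow> 'b" and psi :: "'o \<Rightarrow> 'b \<Rightarrow> 'c"
  assumes "klinear_cat sc Hom cmp ide"
    and "left_strictly_locally_finite sc Hom cmp"
    and "right_module sc Hom cmp ide scL L actL"
    and "right_module sc Hom cmp ide scM M actM"
    and "right_module sc Hom cmp ide scN N actN"
    and "rmod_hom Hom scL L actL scM M actM phi"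
    and "rmod_hom Hom scM M actM scN N actN psi"
    and "short_exact L M N phi psi"
    and "cofinite_module Hom L actL"
    and "cofinite_module Hom N actN"
  shows "cofinite_module Hom M actM"
proof -
  note K = assms(1)
  note RL = assms(3) and RM = assms(4) and RN = assms(5)
  have lf: "\<And>t. finite {z. cat_preceq Hom t z \<and> cat_preceq Hom z t}"
    using lslf_lf[OF assms(2)] .
  have "\<forall>t. \<exists>X. finite X \<and> (\<forall>x\<in>X. cat_prec Hom x t) \<and>
        (\<forall>z f. cat_prec Hom z t \<longrightarrow> f \<in> Hom z t \<longrightarrow>
           (\<exists>n::nat. \<exists>g h xs. f = (\<Sum>i<n. cmp (h i) (g i)) \<and>
              (\<forall>i<n. xs i \<in> X \<and> g i \<in> Hom z (xs i) \<and> h i \<in> Hom (xs i) t)))"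
    using lslf_X[OF assms(2)] .
  from choice[OF this] obtain X where X: "\<forall>t. finite (X t) \<and> (\<forall>x\<in>X t. cat_prec Hom x t) \<and>
        (\<forall>z f. cat_prec Hom z t \<longrightarrow> f \<in> Hom z t \<longrightarrow>
           (\<exists>n::nat. \<exists>g h xs. f = (\<Sum>i<n. cmp (h i) (g i)) \<and>
              (\<forall>i<n. xs i \<in> X t \<and> g i \<in> Hom z (xs i) \<and> h i \<in> Hom (xs i) t)))"
    ..
  have X1: "finite (X t)" for t using conjunct1[OF spec[OF X, of t]] .
  have X2: "cat_prec Hom x t" if "x \<in> X t" for t x using bspec[OF conjunct1[OF conjunct2[OF spec[OF X, of t]]] that] .
  have X3: "\<exists>n::nat. \<exists>g h xs. f = (\<Sum>i<n. cmp (h i) (g i)) \<and>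
              (\<forall>i<n. xs i \<in> X t \<and> g i \<in> Hom z (xs i) \<and> h i \<in> Hom (xs i) t)"
    if "cat_prec Hom z t" "f \<in> Hom z t" for t z f using conjunct2[OF conjunct2[OF spec[OF X, of t]], rule_format, OF that] .
  have "\<forall>w. \<exists>A. finite A \<and> (\<forall>x. x \<notin> A \<longrightarrow> (\<forall>f\<in>Hom x w. \<forall>n\<in>L w. actL f n = 0))"
    using cof_ex[OF assms(9)] .
  from choice[OF this] obtain AL where AL0: "\<forall>w. finite (AL w) \<and> (\<forall>x. x \<notin> AL w \<longrightarrow> (\<forall>f\<in>Hom x w. \<forall>n\<in>L w. actL f n = 0))"
    ..
  have AL1: "finite (AL w)" for w using conjunct1[OF spec[OF AL0, of w]] .
  have AL2: "actL f l = 0" if "x \<notin> AL w" "f \<in> Hom x w" "l \<in> L w" for w x f l using conjunct2[OF spec[OF AL0, of w], rule_format, OF that] .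
  show ?thesis unfolding cofinite_module_def
  proof
    fix y
    from spec[OF cof_ex[OF assms(10)], of y] obtain AN where AN0: "finite AN \<and> (\<forall>x. x \<notin> AN \<longrightarrow> (\<forall>f\<in>Hom x y. \<forall>n\<in>N y. actN f n = 0))" ..
    have AN1: "finite AN" using AN0 by (rule conjunct1)
    have AN2: "actN f n = 0" if "x \<notin> AN" "f \<in> Hom x y" "n \<in> N y" for x f n
      using conjunct2[OF AN0, rule_format, OF that] .
    define S where "S = insert y AN"
    define R where "R = insert y (\<Union>s\<in>S. X s)"
    define A where "A = R \<union> (\<Union>w\<in>R. AL w) \<union> (\<Union>t\<in>R. {z. cat_preceq Hom t z \<and> cat_preceq Hom z t})"
    have finR: "finite R" unfolding R_def S_def using AN1 X1 by auto
    have finA: "finite A" unfolding A_def using finR AL1 lf by auto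
    have claim: "\<forall>x f h m. x \<notin> A \<longrightarrow> f \<in> Hom x t \<longrightarrow> h \<in> Hom t y \<longrightarrow> m \<in> M y \<longrightarrow> actM f (actM h m) = 0"
      if "t \<in> R" for t
      using that
    proof (induct t rule: measure_induct_rule[of "\<lambda>t. card {z\<in>R. cat_prec Hom z t}"])
      case (less t)
      show ?case
      proof (intro allI impI)
        fix x f h m
        assume x: "x \<notin> A" and f: "f \<in> Hom x t" and h: "h \<in> Hom t y" and m: "m \<in> M y"
        have hm: "actM h m \<in> M t" using rm_closed[OF RM h m] .
        show "actM f (actM h m) = 0"
        proof (cases "t \<in> S")
          case False
          then have tn: "t \<notin> AN" "t \<noteq> y" unfolding S_def by auto
          have "psi y m \<in> N y" using assms(8) m unfolding short_exact_def by blast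
          then have "psi t (actM h m) = actN h (psi y m)" "actN h (psi y m) = 0"
            using hm_nat[OF assms(7) h m] AN2[OF tn(1) h] by blast+
          then have "actM h m \<in> phi t ` L t" using hm assms(8) unfolding short_exact_def by auto
          then obtain l where l: "l \<in> L t" "actM h m = phi t l" by blast
          have xt: "x \<notin> AL t" using x less(2) unfolding A_def by blast
          have "actM f (phi t l) = phi x (actL f l)"
            using hm_nat[OF assms(6) f l(1)] by simp
          also have "actL f l = 0" using AL2[OF xt f l(1)] .
          also have "phi x 0 = 0"
          proof -
            have "0 \<in> L x" using rm_0[OF RL] .
            then have "phi x (0 + 0) = phi x 0 + phi x 0" using hm_add[OF assms(6)] by blast
            then show ?thesis by simp
          qed
          finally show ?thesis using l(2) by simp
        next
          case True
          show ?thesis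
          proof (cases "f = 0")
            case True
            then show ?thesis using act_0[OF K RM hm] by simp
          next
            case False
            then have "Hom x t \<noteq> {0}" using f by blast
            then have p1: "cat_preceq Hom x t" unfolding cat_preceq_def by (metis tranclp.r_into_trancl)
            have "\<not> cat_preceq Hom t x" using x p1 less(2) unfolding A_def by blast
            then have xt: "cat_prec Hom x t" using p1 unfolding cat_prec_def by blast
            obtain n :: nat and g hh xs where fs: "f = (\<Sum>i<n. cmp (hh i) (g i))"
              and gh: "\<And>i. i < n \<Longrightarrow> xs i \<in> X t \<and> g i \<in> Hom x (xs i) \<and> hh i \<in> Hom (xs i) t"
              using X3[OF xt f] by blast
            have each: "actM (cmp (hh i) (g i)) (actM h m) = 0" if i: "i < n" for i
            proof -
              have xi: "xs i \<in> R" using gh[OF i] True unfolding R_def by blast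
              have pi: "cat_prec Hom (xs i) t" using X2 gh[OF i] by blast
              have "{z\<in>R. cat_prec Hom z (xs i)} \<subset> {z\<in>R. cat_prec Hom z t}"
                using pi xi prec_trans[of Hom _ "xs i" t] prec_irrefl[of Hom "xs i"] by blast
              then have lt: "card {z\<in>R. cat_prec Hom z (xs i)} < card {z\<in>R. cat_prec Hom z t}"
                using finR by (simp add: psubset_card_mono)
              have hc: "cmp h (hh i) \<in> Hom (xs i) y" using kc_cmp[OF K] gh[OF i] h by blast
              have e1: "actM (cmp (hh i) (g i)) (actM h m) = actM (g i) (actM (hh i) (actM h m))"
                using rm_comp[OF RM] gh[OF i] hm by blast
              have hhi: "hh i \<in> Hom (xs i) t" using gh[OF i] by blast
              have e2: "actM (hh i) (actM h m) = actM (cmp h (hh i)) m"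
                using rm_comp[OF RM hhi h m] by simp
              have e3: "actM (g i) (actM (cmp h (hh i)) m) = 0"
                using less(1)[OF lt xi] x gh[OF i] hc m by blast
              show ?thesis using e1 e2 e3 by simp
            qed
            have "\<forall>i<n. cmp (hh i) (g i) \<in> Hom x t" using kc_cmp[OF K] gh by blast
            from act_sum[OF K RM this hm]
            have "actM f (actM h m) = (\<Sum>i<n. actM (cmp (hh i) (g i)) (actM h m))" using fs by simp
            also have "\<dots> = 0" using each by simp
            finally show ?thesis .
          qed
        qed
      qed
    qed
    have yR: "y \<in> R" unfolding R_def by blast
    have "\<forall>x. x \<notin> A \<longrightarrow> (\<forall>f\<in>Hom x y. \<forall>n\<in>M y. actM f n = 0)"
    proof (intro allI impI ballI)
      fix x f n assume "x \<notin> A" "f \<in> Hom x y" "n \<in> M y"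
      moreover have "actM (ide y) n = n" using rm_id[OF RM] \<open>n \<in> M y\<close> by blast
      moreover have "ide y \<in> Hom y y" using kc_id[OF K] .
      ultimately show "actM f n = 0" using claim[OF yR] by metis
    qed
    then show "\<exists>A. finite A \<and> (\<forall>x. x \<notin> A \<longrightarrow> (\<forall>f\<in>Hom x y. \<forall>n\<in>M y. actM f n = 0))"
      using finA by blast
  qed
qed

end
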